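(* Let $r\ge1$ and $\mu>0$. The holomorphic map $f:M_{\Delta^r}(\mu)\to\ell^2(\mathbb C)$, $f(z,w)=(\psi_1,\dots,\psi_r,\Psi)$, where for $j=1,\dots,r$ $$\psi_j=\sqrt\mu\left(z_j,\frac{z_j^2}{\sqrt2},\dots,\frac{z_j^k}{\sqrt k},\dots\right),$$ and $\Psi$ has components indexed by $k=(k_1,\dots,k_r)\in\mathbb Z_{\ge0}^r$ and $a\in\mathbb Z_{\ge1}$ given by $$\frac1{\sqrt a}\sqrt{\binom{\mu a+k_1-1}{k_1}\cdots\binom{\mu a+k_r-1}{k_r}}\;z_1^{k_1}\cdots z_r^{k_r}w^a,$$ satisfies $\sum_j|f_j(z,w)|^2=-\log\left(\prod_{j=1}^r(1-|z_j|^2)^\mu-|w|^2\right)$; in particular $f^*\omega_0=\omega_{\Delta^r}(\mu)$.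
   Context: $M_{\Delta^r}(\mu)=\{(z,w)\in\Delta^r\times\mathbb C:|w|^2<\prod_{j=1}^r(1-|z_j|^2)^\mu\}$ with Kähler metric $\omega_{\Delta^r}(\mu)=\frac i2\partial\bar\partial\left(-\log\left(\prod_{j}(1-|z_j|^2)^\mu-|w|^2\right)\right)$. $\ell^2(\mathbb C)$ is the Hilbert space of square-summable complex sequences with flat Kähler form $\omega_0=\frac i2\partial\bar\partial\sum_j|x_j|^2$. Binomial coefficients with non-integer top entry are generalized: $\binom{x}{k}=x(x-1)\cdots(x-k+1)/k!$. *)

theory Defs
  imports "HOL-Analysis.Analysis"
begin

text \<open>Points of Delta^r x C are pairs (z, w) with z :: complex^'r (the index type 'r
  has r = CARD('r) >= 1 elements) and w :: complex.\<close>

definition M_Delta :: "real \<Rightarrow> ((complex ^ 'r) \<times> complex) set" where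
  "M_Delta \<mu> = {(z, w). (\<forall>j. norm (z $ j) < 1) \<and>
      (norm w)\<^sup>2 < (\<Prod>j\<in>UNIV. (1 - (norm (z $ j))\<^sup>2) powr \<mu>)}"

text \<open>Index set of the components of f: Inl (j, k) with k >= 1 indexes the k-th
  component of psi_j; Inr (k, a) with k a multi-index in Z_{>=0}^r and a >= 1
  indexes the components of Psi.\<close>

definition f_index :: "(('r \<times> nat) + ((nat ^ 'r) \<times> nat)) set" where
  "f_index = {Inl (j, k) | j k. k \<ge> 1} \<union> {Inr (k, a) | k a. a \<ge> 1}"

definition f_comp :: "real \<Rightarrow> complex ^ 'r \<Rightarrow> complex \<Rightarrow>
    ('r \<times> nat) + ((nat ^ 'r) \<times> nat) \<Rightarrow> complex" where
  "f_comp \<mu> z w i = (case i of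
      Inl (j, k) \<Rightarrow> complex_of_real (sqrt \<mu>) * (z $ j) ^ k / complex_of_real (sqrt (real k))
    | Inr (k, a) \<Rightarrow> complex_of_real (1 / sqrt (real a)) *
        complex_of_real (sqrt (\<Prod>j\<in>UNIV. (\<mu> * real a + real (k $ j) - 1) gchoose (k $ j))) *
        (\<Prod>j\<in>UNIV. (z $ j) ^ (k $ j)) * w ^ a)"

end

theory Submission
  imports Defs
begin

lemma has_sum_Sigma_nonneg:
  fixes f :: "'a \<times> 'b \<Rightarrow> real"
  assumes "\<And>x. x\<in>A \<Longrightarrow> ((\<lambda>y. f (x,y)) has_sum g x) (B x)" "(g has_sum S) A"
    "\<And>x y. x\<in>A \<Longrightarrow> y\<in>B x \<Longrightarrow> f (x,y) \<ge> 0"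
  shows "(f has_sum S) (Sigma A B)"
  using has_sum_SigmaI[OF assms(1,2) summable_on_SigmaI[OF assms(1) has_sum_imp_summable[OF assms(2)] assms(3)]]
  by blast

lemma log_series_has_sum:
  fixes y :: real
  assumes "0 \<le> y" "y < 1"
  shows "((\<lambda>n. y^n / real n) has_sum - ln (1 - y)) {1..}"
proof -
  have "(\<lambda>n. - ((- (-y))^n) / of_nat n) sums ln (1 + - y)"
    by (rule ln_series') (use assms in auto)
  hence "(\<lambda>n. - (y^n / real n)) sums ln (1 - y)" by simp
  hence "(\<lambda>n. y^n / real n) sums - ln (1 - y)"
    using sums_minus by fastforce
  hence "((\<lambda>n. y^n / real n) has_sum - ln (1 - y)) UNIV"
    by (rule sums_nonneg_imp_has_sum) (use assms in auto)
  thus ?thesis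
    by (rule has_sum_cong_neutral[THEN iffD1, rotated -1]) auto
qed

lemma has_sum_prod_PiE_nonneg:
  fixes f :: "'a \<Rightarrow> 'b \<Rightarrow> real"
  assumes "finite A" "\<And>x. x\<in>A \<Longrightarrow> (f x has_sum s x) (B x)"
    "\<And>x y. x\<in>A \<Longrightarrow> y\<in>B x \<Longrightarrow> f x y \<ge> 0"
  shows "((\<lambda>g. \<Prod>x\<in>A. f x (g x)) has_sum (\<Prod>x\<in>A. s x)) (PiE A B)"
  using assms
proof (induction A rule: finite_induct)
  case empty
  then show ?case by (intro has_sum_finiteI) auto
next
  case (insert x F)
  have pi: "Pi\<^sub>E (insert x F) B = (\<lambda>(g,y). g(x:=y)) ` (Pi\<^sub>E F B \<times> B x)"
    unfolding PiE_insert_eq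
    by (subst swap_product [symmetric]) (simp add: image_image case_prod_unfold)
  have inj: "inj_on (\<lambda>(g, y). g(x := y)) (Pi\<^sub>E F B \<times> B x)"
    using \<open>x \<notin> F\<close> by (rule inj_combinator')
  have eq: "((\<lambda>g. \<Prod>x\<in>insert x F. f x (g x)) \<circ> (\<lambda>(g,y). g(x:=y))) =
             (\<lambda>(p, y). f x y * (\<Prod>x'\<in>F. f x' (p x')))"
  proof -
    have "(\<Prod>z\<in>F. f z ((g(x := y)) z)) = (\<Prod>z\<in>F. f z (g z))" for g y
      using insert.hyps by (intro prod.cong) auto
    thus ?thesis using insert.hyps by (auto simp: fun_eq_iff)
  qed
  have IH: "((\<lambda>g. \<Prod>x\<in>F. f x (g x)) has_sum (\<Prod>x\<in>F. s x)) (PiE F B)"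
    using insert by auto
  have "((\<lambda>(p, y). f x y * (\<Prod>x'\<in>F. f x' (p x'))) has_sum (s x * (\<Prod>x\<in>F. s x))) (Sigma (PiE F B) (\<lambda>_. B x))"
  proof (rule has_sum_Sigma_nonneg)
    fix p assume "p \<in> PiE F B"
    show "((\<lambda>y. case (p, y) of (p, y) \<Rightarrow> f x y * (\<Prod>x'\<in>F. f x' (p x'))) has_sum s x * (\<Prod>x'\<in>F. f x' (p x'))) (B x)"
      using has_sum_cmult_left[OF insert.prems(1)[of x]] by simp
  next
    show "((\<lambda>p. s x * (\<Prod>x'\<in>F. f x' (p x'))) has_sum s x * prod s F) (Pi\<^sub>E F B)"
      by (rule has_sum_cmult_right[OF IH])
  next
    fix p y assume "p \<in> PiE F B" "y \<in> B x"
    thus "0 \<le> (case (p, y) of (p, y) \<Rightarrow> f x y * (\<Prod>x'\<in>F. f x' (p x')))"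
      using insert.prems(2) by (auto intro!: mult_nonneg_nonneg prod_nonneg)
  qed
  hence "((\<lambda>g. \<Prod>x\<in>insert x F. f x (g x)) has_sum (s x * (\<Prod>x\<in>F. s x))) (Pi\<^sub>E (insert x F) B)"
    unfolding pi has_sum_reindex[OF inj] eq by simp
  thus ?case using insert.hyps by simp
qed

lemma has_sum_prod_vec_nonneg:
  fixes h :: "'r::finite \<Rightarrow> nat \<Rightarrow> real"
  assumes "\<And>j. (h j has_sum s j) UNIV" "\<And>j n. h j n \<ge> 0"
  shows "((\<lambda>k::nat^'r. \<Prod>j\<in>UNIV. h j (k $ j)) has_sum (\<Prod>j\<in>UNIV. s j)) UNIV"
proof -
  have "((\<lambda>g. \<Prod>j\<in>UNIV. h j (g j)) has_sum (\<Prod>j\<in>UNIV. s j)) (PiE UNIV (\<lambda>_. UNIV))"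
    by (rule has_sum_prod_PiE_nonneg) (use assms in auto)
  hence 1: "((\<lambda>g. \<Prod>j\<in>UNIV. h j (g j)) has_sum (\<Prod>j\<in>UNIV. s j)) UNIV"
    by (simp add: PiE_UNIV_domain)
  have inj: "inj_on (vec_lambda :: ('r \<Rightarrow> nat) \<Rightarrow> nat^'r) UNIV"
    by (auto simp: inj_on_def vec_lambda_inject)
  have surj: "range (vec_lambda :: ('r \<Rightarrow> nat) \<Rightarrow> nat^'r) = UNIV"
    by (metis surj_def vec_lambda_eta)
  have "((\<lambda>k::nat^'r. \<Prod>j\<in>UNIV. h j (k $ j)) has_sum (\<Prod>j\<in>UNIV. s j)) (range vec_lambda)"
    unfolding has_sum_reindex[OF inj] using 1 by (simp add: o_def)
  thus ?thesis using surj by simp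
qed


lemma gbin_nonneg:
  fixes m :: real
  assumes "m \<ge> 0"
  shows "((m + real n - 1) gchoose n) \<ge> 0"
  using assms by (cases "m = 0") (auto simp: gbinomial_pochhammer' pochhammer_nonneg pochhammer_0_left)

lemma binom_series:
  fixes x m :: real
  assumes "0 \<le> x" "x < 1" "m \<ge> 0"
  shows "((\<lambda>n. ((m + real n - 1) gchoose n) * x ^ n) has_sum (1 - x) powr (- m)) UNIV"
proof -
  have "(\<lambda>n. ((- m) gchoose n) * (- x)^n) sums (1 + - x) powr (- m)"
    by (rule gen_binomial_real) (use assms in auto)
  moreover have "((- m) gchoose n) * (- x)^n = ((m + real n - 1) gchoose n) * x ^ n" for n
  proof -
    have e: "((- m) gchoose n) = (-1)^n * ((m + real n - 1) gchoose n)"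
      by (rule gbinomial_minus)
    have f: "(- x)^n = (-1)^n * x^n" by (rule power_minus)
    have g: "((-1::real)^n) * (-1)^n = 1"
      by (metis power_minus1_even power_mult_distrib mult_2 power_add)
    show ?thesis unfolding e f
      by (metis (no_types, lifting) g mult.assoc mult.commute mult.left_neutral)
  qed
  ultimately have "(\<lambda>n. ((m + real n - 1) gchoose n) * x ^ n) sums (1 - x) powr (- m)" by simp
  thus ?thesis
    using assms gbin_nonneg[OF assms(3)] by (auto intro!: sums_nonneg_imp_has_sum)
qed

theorem lemma5p1:
  fixes \<mu> :: real and z :: "complex ^ 'r" and w :: complex
  assumes "\<mu> > 0" and "(z, w) \<in> M_Delta \<mu>"
  shows "((\<lambda>i. (norm (f_comp \<mu> z w i))\<^sup>2) has_sum
           (- ln ((\<Prod>j\<in>UNIV. (1 - (norm (z $ j))\<^sup>2) powr \<mu>) - (norm w)\<^sup>2))) f_index"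
proof -
  define x where "x j = (norm (z$j))^2" for j
  define t where "t = (norm w)^2"
  define P where "P = (\<Prod>j\<in>UNIV. (1 - x j) powr \<mu>)"
  define F where "F i = (norm (f_comp \<mu> z w i))\<^sup>2" for i
  have x1: "x j < 1" for j
    using assms(2) unfolding M_Delta_def x_def
    by (auto simp: abs_square_less_1)
  have x0: "x j \<ge> 0" for j unfolding x_def by simp
  have t0: "t \<ge> 0" unfolding t_def by simp
  have tP: "t < P" using assms(2) unfolding M_Delta_def t_def P_def x_def by auto
  have P0: "P > 0" unfolding P_def using x1 by (intro prod_pos) (smt (verit) powr_gt_zero x1)
  have goal: "- ln ((\<Prod>j\<in>UNIV. (1 - (norm (z $ j))\<^sup>2) powr \<mu>) - (norm w)\<^sup>2) = - ln (P - t)"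
    unfolding P_def x_def t_def ..
  define S1 where "S1 = Sigma (UNIV::'r set) (\<lambda>_. {1::nat..})"
  have hA: "F (Inl (j,k)) = \<mu> * (x j ^ k / real k)" for j k
    using assms(1) by (simp add: F_def f_comp_def x_def norm_mult norm_divide norm_power
        power_mult_distrib power_divide mult.commute flip: power_mult)
  have A: "(F has_sum (\<Sum>j\<in>UNIV. \<mu> * - ln (1 - x j))) (Inl ` S1)"
  proof -
    have "((\<lambda>(j,k). \<mu> * (x j ^ k / real k)) has_sum (\<Sum>j\<in>UNIV. \<mu> * - ln (1 - x j))) S1"
      unfolding S1_def
    proof (rule has_sum_Sigma_nonneg)
      fix j :: 'r
      show "((\<lambda>k. case (j, k) of (j, k) \<Rightarrow> \<mu> * (x j ^ k / real k)) has_sum \<mu> * - ln (1 - x j)) {1..}"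
        using has_sum_cmult_right[OF log_series_has_sum[OF x0 x1], of \<mu> j] by simp
    next
      show "((\<lambda>j. \<mu> * - ln (1 - x j)) has_sum (\<Sum>j\<in>UNIV. \<mu> * - ln (1 - x j))) UNIV"
        by (rule has_sum_finiteI) auto
    next
      fix j k show "0 \<le> (case (j, k) of (j, k) \<Rightarrow> \<mu> * (x j ^ k / real k))"
        using assms(1) x0 by simp
    qed
    hence "((\<lambda>i. F (Inl i)) has_sum (\<Sum>j\<in>UNIV. \<mu> * - ln (1 - x j))) S1"
      by (rule has_sum_cong[THEN iffD1, rotated]) (auto simp: hA)
    thus ?thesis
      by (subst has_sum_reindex) (auto simp: o_def)
  qed
  define S2 where "S2 = Sigma {1::nat..} (\<lambda>_. UNIV :: (nat^'r) set)"
  define h where "h = (\<lambda>(a::nat, k::nat^'r). (Inr (k, a) :: ('r \<times> nat) + ((nat ^ 'r) \<times> nat)))"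
  define c where "c a n = ((\<mu> * real a + real n - 1) gchoose n)" for a n
  have c0: "c a n \<ge> 0" for a n
    unfolding c_def using gbin_nonneg[of "\<mu> * real a"] assms(1) by simp
  have hB: "F (h (a,k)) = (1 / real a * t ^ a) * (\<Prod>j\<in>UNIV. c a (k$j) * x j ^ (k$j))" for a k
  proof -
    have C: "0 \<le> (\<Prod>j\<in>UNIV. c a (k$j))" by (intro prod_nonneg) (use c0 in auto)
    have "(norm (\<Prod>j\<in>UNIV. (z $ j) ^ (k $ j)))^2 = (\<Prod>j\<in>UNIV. x j ^ (k$j))"
    proof -
      have "(norm (\<Prod>j\<in>UNIV. (z $ j) ^ (k $ j)))^2 = (\<Prod>j\<in>UNIV. norm (z$j) ^ (k$j))^2"
        by (simp add: prod_norm[symmetric] norm_power)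
      also have "\<dots> = (\<Prod>j\<in>UNIV. (norm (z$j) ^ (k$j))^2)" by (simp add: prod_power_distrib)
      also have "\<dots> = (\<Prod>j\<in>UNIV. x j ^ (k$j))"
        by (intro prod.cong refl) (simp add: x_def mult.commute flip: power_mult)
      finally show ?thesis .
    qed
    note Q = this
    define CC where "CC = (\<Prod>j\<in>UNIV. c a (k$j))"
    have CC0: "CC \<ge> 0" using C unfolding CC_def .
    have N: "(norm (1 / complex_of_real (sqrt (real a))))^2 = 1 / real a"
      by (simp add: norm_divide power_divide)
    have "F (h (a,k)) = (norm (complex_of_real (1 / sqrt (real a))))^2 * (norm (complex_of_real (sqrt CC)))^2 *
        (norm (\<Prod>j\<in>UNIV. (z $ j) ^ (k $ j)))^2 * (norm (w ^ a))^2"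
      unfolding F_def h_def f_comp_def CC_def c_def by (simp only: sum.case prod.case norm_mult power_mult_distrib)
    also have "\<dots> = (1 / real a) * CC * (\<Prod>j\<in>UNIV. x j ^ (k$j)) * t ^ a"
      unfolding Q using CC0 N by (simp add: power_divide t_def norm_power flip: power_mult)
         (simp add: mult.commute power_mult)
    also have "\<dots> = (1 / real a * t ^ a) * (\<Prod>j\<in>UNIV. c a (k$j) * x j ^ (k$j))"
      unfolding CC_def by (simp add: prod.distrib mult_ac)
    finally show ?thesis .
  qed
  have B: "(F has_sum (- ln (1 - t / P))) (h ` S2)"
  proof -
    have "((\<lambda>(a,k). (1 / real a * t ^ a) * (\<Prod>j\<in>UNIV. c a (k$j) * x j ^ (k$j))) has_sum (- ln (1 - t / P))) S2"
      unfolding S2_def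
    proof (rule has_sum_Sigma_nonneg)
      fix a :: nat assume a: "a \<in> {1..}"
      have "((\<lambda>k::nat^'r. \<Prod>j\<in>UNIV. c a (k$j) * x j ^ (k$j)) has_sum (\<Prod>j\<in>UNIV. (1 - x j) powr (- (\<mu> * real a)))) UNIV"
        by (rule has_sum_prod_vec_nonneg) (use binom_series[OF x0 x1] c0 x0 assms(1) in \<open>auto simp: c_def\<close>)
      moreover have "(\<Prod>j\<in>UNIV. (1 - x j) powr (- (\<mu> * real a))) = inverse P ^ a"
      proof -
        have "(1 - x j) powr (- (\<mu> * real a)) = inverse ((1 - x j) powr \<mu>) ^ a" for j
          using x1[of j] by (simp add: powr_minus powr_powr[symmetric] powr_realpow power_inverse)
        moreover have "(\<Prod>j\<in>UNIV. inverse ((1 - x j) powr \<mu>) ^ a) = inverse (\<Prod>j\<in>UNIV. (1 - x j) powr \<mu>) ^ a"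
          using prod_inversef[of "\<lambda>j. (1 - x j) powr \<mu>" UNIV]
            prod_power_distrib[of "\<lambda>j. inverse ((1 - x j) powr \<mu>)" UNIV a]
          unfolding o_def by simp
        ultimately show ?thesis unfolding P_def by simp
      qed
      ultimately have "((\<lambda>k::nat^'r. (\<Prod>j\<in>UNIV. c a (k$j) * x j ^ (k$j))) has_sum inverse P ^ a) UNIV"
        by simp
      hence "((\<lambda>k::nat^'r. (1 / real a * t ^ a) * (\<Prod>j\<in>UNIV. c a (k$j) * x j ^ (k$j))) has_sum (1 / real a * t ^ a) * inverse P ^ a) UNIV"
        by (rule has_sum_cmult_right)
      moreover have "(1 / real a * t ^ a) * inverse P ^ a = (t / P) ^ a / real a"
        by (simp add: power_divide divide_inverse power_inverse power_mult_distrib)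
      ultimately show "((\<lambda>k. case (a, k) of (a, k) \<Rightarrow> 1 / real a * t ^ a * (\<Prod>j\<in>UNIV. c a (k $ j) * x j ^ (k $ j))) has_sum (t / P) ^ a / real a) UNIV"
        using a by simp
    next
      show "((\<lambda>a. (t / P) ^ a / real a) has_sum - ln (1 - t / P)) {1..}"
        by (rule log_series_has_sum) (use t0 P0 tP in auto)
    next
      fix a k show "0 \<le> (case (a, k) of (a, k) \<Rightarrow> 1 / real a * t ^ a * (\<Prod>j\<in>UNIV. c a (k $ j) * x j ^ (k $ j)))"
        using t0 c0 x0 by (simp only: prod.case) (intro mult_nonneg_nonneg prod_nonneg divide_nonneg_nonneg zero_le_power; simp)
    qed
    moreover have "inj_on h S2" unfolding h_def S2_def by (auto simp: inj_on_def)
    moreover have "((\<lambda>i. F (h i)) has_sum (- ln (1 - t / P))) S2"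
      using calculation(1) by (rule has_sum_cong[THEN iffD1, rotated]) (auto simp: hB)
    ultimately show ?thesis
      by (subst has_sum_reindex) (auto simp: o_def)
  qed
  have idx: "f_index = Inl ` S1 \<union> h ` S2"
    unfolding f_index_def S1_def S2_def h_def by (auto simp: image_iff)
  have "(F has_sum ((\<Sum>j\<in>UNIV. \<mu> * - ln (1 - x j)) + - ln (1 - t / P))) f_index"
    unfolding idx by (rule has_sum_Un_disjoint[OF A B]) (auto simp: h_def)
  moreover have "(\<Sum>j\<in>UNIV. \<mu> * - ln (1 - x j)) + - ln (1 - t / P) = - ln (P - t)"
  proof -
    have "ln P = (\<Sum>j\<in>UNIV. \<mu> * ln (1 - x j))"
      unfolding P_def using x1 by (subst ln_prod) (auto, metis less_irrefl x1)
    moreover have "ln (P - t) = ln P + ln (1 - t / P)"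
    proof -
      have "P - t = P * (1 - t / P)" using P0 by (simp add: field_simps)
      moreover have "1 - t / P > 0" using P0 tP by (simp add: field_simps)
      ultimately show ?thesis using P0 by (simp add: ln_mult)
    qed
    ultimately show ?thesis by (simp add: sum_negf)
  qed
  ultimately show ?thesis unfolding goal F_def by simp
qed

end
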